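(* Let $b>0$ and let $f:\mathbb{R}\to\mathbb{R}$ be any function. Suppose $g_1,g_2:\mathbb{R}\to\mathbb{R}$ are measurable functions such that for every $q\in\mathbb{R}$, with $Z\sim\operatorname{Lap}(0,b)$, the expectations $\mathbb{E}[g_1(q+Z)]$ and $\mathbb{E}[g_2(q+Z)]$ exist (are finite) and $\mathbb{E}[g_1(q+Z)]=\mathbb{E}[g_2(q+Z)]=f(q)$. Then $g_1=g_2$ almost everywhere (with respect to Lebesgue measure).
   Context: $\operatorname{Lap}(0,b)$ denotes the Laplace distribution with density $\frac{1}{2b}e^{-|x|/b}$ on $\mathbb{R}$. *)

theory Defs
  imports "HOL-Analysis.Analysis"
begin

definition laplace_density :: "real \<Rightarrow> real \<Rightarrow> real" where
  "laplace_density b x = exp (- \<bar>x\<bar> / b) / (2 * b)"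

definition laplace_measure :: "real \<Rightarrow> real measure" where
  "laplace_measure b = density lebesgue (\<lambda>x. ennreal (laplace_density b x))"

end

theory Submission
  imports Defs
begin

locale core =
  fixes k :: "real \<Rightarrow> real"
  assumes kb[measurable]: "k \<in> borel_measurable borel"
    and H1: "\<And>q. integrable lborel (\<lambda>x. exp (-\<bar>x-q\<bar>) * k x)"
    and H2: "\<And>q. (\<integral>x. exp (-\<bar>x-q\<bar>) * k x \<partial>lborel) = 0"
begin

definition "A q = (\<integral>x. indicator {..<q} x * (exp x * k x) \<partial>lborel)"
definition "B q = (\<integral>x. indicator {q..} x * (exp (-x) * k x) \<partial>lborel)"

lemma eqB: "(\<lambda>x. indicator {q..} x * (exp (-x) * k x)) = (\<lambda>x. exp (-q) * (indicator {q..} x * (exp (-\<bar>x-q\<bar>) * k x)))"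
proof
  fix x
  have "exp (-x) = exp(-q) * exp (-(x-q))" by (simp add: exp_add[symmetric])
  then show "indicator {q..} x * (exp (-x) * k x) = exp (-q) * (indicator {q..} x * (exp (-\<bar>x-q\<bar>) * k x))"
    by (auto simp: indicator_def)
qed

lemma eqA: "(\<lambda>x. indicator {..<q} x * (exp x * k x)) = (\<lambda>x. exp q * (indicator {..<q} x * (exp (-\<bar>x-q\<bar>) * k x)))"
proof
  fix x
  have "exp x = exp q * exp (x-q)" by (simp add: exp_add[symmetric])
  then show "indicator {..<q} x * (exp x * k x) = exp q * (indicator {..<q} x * (exp (-\<bar>x-q\<bar>) * k x))"
    by (auto simp: indicator_def)
qed

lemma intB: "integrable lborel (\<lambda>x. indicator {q..} x * (exp (-x) * k x))"
  unfolding eqB using integrable_mult_indicator[OF _ H1, of "{q..}" q] by (intro integrable_mult_right) simp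

lemma intA: "integrable lborel (\<lambda>x. indicator {..<q} x * (exp x * k x))"
  unfolding eqA using integrable_mult_indicator[OF _ H1, of "{..<q}" q] by (intro integrable_mult_right) simp

lemma eq1: "exp (-q) * A q + exp q * B q = 0"
proof -
  have "(\<lambda>x. exp (-\<bar>x-q\<bar>) * k x) = (\<lambda>x. exp (-q) * (indicator {..<q} x * (exp x * k x)) + exp q * (indicator {q..} x * (exp (-x) * k x)))"
  proof
    fix x
    have "exp (-q) * exp x = exp (x - q)" "exp q * exp (-x) = exp (-(x-q))" by (simp_all add: exp_add[symmetric])
    then show "exp (-\<bar>x-q\<bar>) * k x = exp (-q) * (indicator {..<q} x * (exp x * k x)) + exp q * (indicator {q..} x * (exp (-x) * k x))"
      by (auto simp: indicator_def algebra_simps)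
  qed
  then have "0 = (\<integral>x. exp (-q) * (indicator {..<q} x * (exp x * k x)) + exp q * (indicator {q..} x * (exp (-x) * k x)) \<partial>lborel)"
    using H2[of q] by simp
  also have "\<dots> = exp (-q) * A q + exp q * B q"
    unfolding A_def B_def using intA intB by (simp add: integral_add)
  finally show ?thesis by simp
qed

lemma contB: "isCont B q"
proof (rule continuous_at_sequentiallyI)
  fix u :: "nat \<Rightarrow> real" assume u: "u \<longlonglongrightarrow> q"
  then have "Bseq u" using convergent_imp_Bseq convergentI by blast
  then obtain K where K: "K > 0" "\<And>n. norm (u n) \<le> K" unfolding Bseq_def by blast
  have lb: "-K \<le> u n" for n using K(2)[of n] by auto
  show "(\<lambda>n. B (u n)) \<longlonglongrightarrow> B q"
    unfolding B_def
  proof (rule integral_dominated_convergence[where w="\<lambda>x. \<bar>indicator {-K..} x * (exp (-x) * k x)\<bar>"])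
    show "integrable lborel (\<lambda>x. \<bar>indicator {-K..} x * (exp (-x) * k x)\<bar>)"
      using intB by (intro integrable_abs)
    show "AE x in lborel. norm (indicator {u n..} x * (exp (-x) * k x)) \<le> \<bar>indicator {-K..} x * (exp (-x) * k x)\<bar>" for n
      using lb[of n] by (intro AE_I2) (auto simp: indicator_def abs_mult)
    show "AE x in lborel. (\<lambda>n. indicator {u n..} x * (exp (-x) * k x)) \<longlonglongrightarrow> indicator {q..} x * (exp (-x) * k x)"
      using AE_lborel_singleton[of q]
    proof eventually_elim
      fix x :: real assume "x \<noteq> q"
      then consider "x < q" | "x > q" by linarith
      then have "\<forall>\<^sub>F n in sequentially. indicator {u n..} x = (indicator {q..} x :: real)"
      proof cases
        case 1
        then have "\<forall>\<^sub>F n in sequentially. x < u n" using order_tendstoD(1)[OF u 1] by blast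
        then show ?thesis using 1 by (auto elim!: eventually_mono simp: indicator_def)
      next
        case 2
        then have "\<forall>\<^sub>F n in sequentially. u n < x" using order_tendstoD(2)[OF u 2] by blast
        then show ?thesis using 2 by (auto elim!: eventually_mono simp: indicator_def)
      qed
      then have "\<forall>\<^sub>F n in sequentially. indicator {u n..} x * (exp (-x) * k x) = indicator {q..} x * (exp (-x) * k x)"
        by eventually_elim simp
      then show "(\<lambda>n. indicator {u n..} x * (exp (-x) * k x)) \<longlonglongrightarrow> indicator {q..} x * (exp (-x) * k x)"
        by (rule tendsto_eventually)
    qed
  qed auto
qed

definition "G s t (y::real) = (if y < s then 0 else exp (2 * min t y) - exp (2 * s))"

lemma G_nonneg: "s \<le> t \<Longrightarrow> 0 \<le> G s t y"
  by (auto simp: G_def min_def)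

lemma G_le: "s \<le> t \<Longrightarrow> G s t y \<le> exp (2*t) * indicator {s..} y"
proof -
  have "exp (2 * min t y) \<le> exp (2 * t)" by simp
  moreover have "0 < exp (2 * s)" by simp
  ultimately have f: "exp (2 * min t y) - exp (2 * s) \<le> exp (2 * t)" by linarith
  show "s \<le> t \<Longrightarrow> G s t y \<le> exp (2*t) * indicator {s..} y"
  proof (cases "y < s")
    case False then show ?thesis using f by (simp add: G_def indicator_def)
  qed (simp add: G_def indicator_def)
qed

lemma innerG:
  assumes "s \<le> t"
  shows "(\<integral>x. indicator {s..t} x * indicator {..y} x * (2 * exp (2 * x)) \<partial>lborel) = G s t y"
proof (cases "y < s")
  case True
  then have "(\<lambda>x. indicator {s..t} x * indicator {..y} x * (2 * exp (2 * x))) = (\<lambda>x. 0::real)"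
    by (auto simp: indicator_def)
  then show ?thesis using True by (simp add: G_def)
next
  case False
  then have le: "s \<le> min t y" using assms by simp
  have "(\<lambda>x. indicator {s..t} x * indicator {..y} x * (2 * exp (2 * x))) = (\<lambda>x. indicator {s..min t y} x *\<^sub>R (2 * exp (2 * x)))"
    by (auto simp: indicator_def)
  moreover have "(\<integral>x. indicator {s..min t y} x *\<^sub>R (2 * exp (2 * x)) \<partial>lborel) = exp (2 * min t y) - exp (2 * s)"
  proof (rule integral_FTC_atLeastAtMost[OF le])
    show "((\<lambda>x. exp (2*x)) has_vector_derivative 2 * exp (2 * x)) (at x within {s..min t y})" for x
      by (auto intro!: derivative_eq_intros simp: has_real_derivative_iff_has_vector_derivative[symmetric])
    show "continuous_on {s..min t y} (\<lambda>x. 2 * exp (2 * x))"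
      by (intro continuous_intros)
  qed
  ultimately show ?thesis using False by (simp add: G_def)
qed

lemma AB: "A q = - exp (2*q) * B q"
proof -
  have "exp q * (exp (-q) * A q + exp q * B q) = 0" using eq1 by simp
  moreover have "exp q * exp (-q) = 1" "exp q * exp q = exp (2*q)" by (simp_all add: exp_add[symmetric])
  ultimately show ?thesis by (simp add: algebra_simps) (metis add_eq_0_iff mult.assoc mult.commute mult_1)
qed

lemma fub:
  assumes st: "s \<le> t"
  shows "(\<integral>x. indicator {s..t} x * (2 * exp (2 * x)) * B x \<partial>lborel) = 0"
proof -
  define F where "F = (\<lambda>(y::real, x::real). indicator {s..t} x * (if x \<le> y then 1 else 0) * (2 * exp (2 * x)) * (exp (-y) * k y))"
  have Fm[measurable]: "F \<in> borel_measurable (lborel \<Otimes>\<^sub>M lborel)"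
    unfolding F_def by measurable
  have ind: "(if x \<le> y then 1 else 0) = (indicator {..y} x :: real)" for x y :: real
    by (simp add: indicator_def)
  have inner1: "(\<integral>x. F (y, x) \<partial>lborel) = G s t y * (exp (-y) * k y)" for y
    using innerG[OF st, of y] by (simp add: F_def ind integral_mult_left_zero)
  have inner1n: "(\<integral>x. norm (F (y, x)) \<partial>lborel) = G s t y * \<bar>exp (-y) * k y\<bar>" for y
  proof -
    have "(\<lambda>x. norm (F (y, x))) = (\<lambda>x. indicator {s..t} x * indicator {..y} x * (2 * exp (2 * x)) * \<bar>exp (-y) * k y\<bar>)"
      by (auto simp: F_def indicator_def abs_mult)
    then show ?thesis using innerG[OF st, of y] by (simp add: integral_mult_left_zero)
  qed
  have int: "integrable (lborel \<Otimes>\<^sub>M lborel) F"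
  proof (rule lborel_pair.Fubini_integrable)
    show "F \<in> borel_measurable (lborel \<Otimes>\<^sub>M lborel)" by (rule Fm)
    show "integrable lborel (\<lambda>y. \<integral>x. norm (F (y, x)) \<partial>lborel)"
      unfolding inner1n
    proof (rule Bochner_Integration.integrable_bound)
      show "integrable lborel (\<lambda>y. exp (2*t) * \<bar>indicator {s..} y * (exp (-y) * k y)\<bar>)"
        using intB by (intro integrable_mult_right integrable_abs)
      show "(\<lambda>y. G s t y * \<bar>exp (- y) * k y\<bar>) \<in> borel_measurable lborel"
        unfolding G_def by measurable
      show "AE y in lborel. norm (G s t y * \<bar>exp (- y) * k y\<bar>) \<le> norm (exp (2*t) * \<bar>indicator {s..} y * (exp (-y) * k y)\<bar>)"
      proof (intro AE_I2)
        fix y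
        have "G s t y * \<bar>exp (- y) * k y\<bar> \<le> (exp (2*t) * indicator {s..} y) * \<bar>exp (- y) * k y\<bar>"
          using G_le[OF st, of y] by (intro mult_right_mono) auto
        then show "norm (G s t y * \<bar>exp (- y) * k y\<bar>) \<le> norm (exp (2*t) * \<bar>indicator {s..} y * (exp (-y) * k y)\<bar>)"
          using G_nonneg[OF st, of y] by (simp add: abs_mult indicator_def)
      qed
    qed
    show "AE y in lborel. integrable lborel (\<lambda>x. F (y, x))"
    proof (intro AE_I2)
      fix y
      show "integrable lborel (\<lambda>x. F (y, x))"
      proof (rule Bochner_Integration.integrable_bound)
        show "integrable lborel (\<lambda>x. indicator {s..t} x * (2 * exp (2 * t) * \<bar>exp (-y) * k y\<bar>))"
          by (intro integrable_mult_left integrable_real_indicator) (auto simp: emeasure_lborel_Icc_eq)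
        show "(\<lambda>x. F (y, x)) \<in> borel_measurable lborel" unfolding F_def prod.case by measurable
        show "AE x in lborel. norm (F (y, x)) \<le> norm (indicator {s..t} x * (2 * exp (2 * t) * \<bar>exp (-y) * k y\<bar>))"
        proof (intro AE_I2)
          fix x
          show "norm (F (y, x)) \<le> norm (indicator {s..t} x * (2 * exp (2 * t) * \<bar>exp (-y) * k y\<bar>))"
          proof (cases "x \<in> {s..t} \<and> x \<le> y")
            case True
            then have "exp (2*x) \<le> exp (2*t)" by simp
            then have "2 * exp (2 * x) * \<bar>exp (-y) * k y\<bar> \<le> 2 * exp (2 * t) * \<bar>exp (-y) * k y\<bar>"
              by (intro mult_right_mono) auto
            then show ?thesis using True by (simp add: F_def abs_mult)
          qed (auto simp: F_def indicator_def)
        qed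
      qed
    qed
  qed
  have "(\<integral>x. (\<integral>y. F (y, x) \<partial>lborel) \<partial>lborel) = (\<integral>y. (\<integral>x. F (y, x) \<partial>lborel) \<partial>lborel)"
    using lborel_pair.Fubini_integral[of "\<lambda>y x. F (y, x)"] int by simp
  also have "\<dots> = (\<integral>y. G s t y * (exp (-y) * k y) \<partial>lborel)"
    by (simp add: inner1)
  also have "\<dots> = (\<integral>y. - exp (2 * s) * (indicator {s..} y * (exp (-y) * k y)) + indicator {..<t} y * (exp y * k y)
       - indicator {..<s} y * (exp y * k y) + exp (2*t) * (indicator {t..} y * (exp (-y) * k y)) \<partial>lborel)"
  proof (rule Bochner_Integration.integral_cong[OF refl])
    fix y :: real
    have e1: "exp (2*y) * exp (-y) = exp y" by (simp add: exp_add[symmetric])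
    show "G s t y * (exp (-y) * k y) = - exp (2 * s) * (indicator {s..} y * (exp (-y) * k y)) + indicator {..<t} y * (exp y * k y)
       - indicator {..<s} y * (exp y * k y) + exp (2*t) * (indicator {t..} y * (exp (-y) * k y))"
      using st e1 by (auto simp: G_def indicator_def min_def algebra_simps)
  qed
  also have "\<dots> = - exp (2 * s) * B s + A t - A s + exp (2*t) * B t"
    unfolding A_def B_def using intA intB
    by (simp add: Bochner_Integration.integral_add Bochner_Integration.integral_diff)
  also have "\<dots> = 0" by (simp add: AB)
  finally have L: "(\<integral>x. (\<integral>y. F (y, x) \<partial>lborel) \<partial>lborel) = 0" .
  have "(\<integral>y. F (y, x) \<partial>lborel) = indicator {s..t} x * (2 * exp (2 * x)) * B x" for x
  proof -
    have "(\<lambda>y. F (y, x)) = (\<lambda>y. (indicator {s..t} x * (2 * exp (2 * x))) * (indicator {x..} y * (exp (-y) * k y)))"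
      by (auto simp: F_def indicator_def)
    then show ?thesis by (simp add: B_def)
  qed
  with L show ?thesis by simp
qed

lemma B0: "B q = 0"
proof (rule ccontr)
  assume nz: "B q \<noteq> 0"
  define \<psi> where "\<psi> x = 2 * exp (2 * x) * B x * B q" for x
  have cont: "continuous_on UNIV \<psi>"
    unfolding \<psi>_def using contB by (intro continuous_at_imp_continuous_on ballI continuous_intros) auto
  have pos: "\<psi> q > 0"
  proof -
    have "B q * B q > 0" using nz by (simp add: zero_less_mult_iff not_le) (use nz in linarith)
    then have "0 < 2 * exp (2 * q) * (B q * B q)" by simp
    then show ?thesis by (simp add: \<psi>_def mult.assoc)
  qed
  have "isCont \<psi> q" using cont by (simp add: continuous_on_eq_continuous_at)
  then have "(\<psi> \<longlongrightarrow> \<psi> q) (at q)" by (simp add: isCont_def)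
  then have "\<forall>\<^sub>F x in at q. \<psi> x > 0" using pos order_tendstoD(1) by blast
  then obtain d where d: "d > 0" "\<And>x. x \<noteq> q \<Longrightarrow> dist x q < d \<Longrightarrow> \<psi> x > 0"
    unfolding eventually_at by blast
  define I where "I = {q - d/2 .. q + d/2}"
  have posI: "\<psi> x > 0" if "x \<in> I" for x
    using d that pos by (cases "x = q") (auto simp: I_def dist_real_def)
  have intI: "integrable lborel (\<lambda>x. indicator I x * \<psi> x)"
    using borel_integrable_atLeastAtMost'[of "q - d/2" "q + d/2" \<psi>] cont
    by (auto simp: I_def set_integrable_def intro: continuous_on_subset)
  have "(\<integral>x. indicator I x * \<psi> x \<partial>lborel) = B q * (\<integral>x. indicator I x * (2 * exp (2 * x)) * B x \<partial>lborel)"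
    by (simp add: \<psi>_def algebra_simps flip: integral_mult_right_zero)
  also have "\<dots> = 0" unfolding I_def using fub[of "q - d/2" "q + d/2"] d by simp
  finally have "(\<integral>x. indicator I x * \<psi> x \<partial>lborel) = 0" .
  then have "AE x in lborel. indicator I x * \<psi> x = 0"
    using integral_nonneg_eq_0_iff_AE[OF intI] posI
    by (auto simp: indicator_def less_imp_le)
  then have "AE x in lborel. x \<notin> I"
    by eventually_elim (use posI in \<open>fastforce simp: indicator_def\<close>)
  moreover have "I \<in> sets lborel" by (simp add: I_def)
  moreover have "{x \<in> space lborel. \<not> x \<notin> I} = I" by auto
  ultimately have "emeasure lborel I = 0"
    using AE_iff_measurable[of "{x \<in> space lborel. \<not> x \<notin> I}" lborel "\<lambda>x. x \<notin> I"] by simp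
  moreover have "emeasure lborel I = ennreal d" using d by (simp add: I_def)
  ultimately show False using d by simp
qed

lemma zero_Ioi: "(\<integral>x. indicator {c..} x * (exp (-x) * k x) * indicator {a<..} x \<partial>lborel) = 0"
proof -
  have "(\<integral>x. indicator {c..} x * (exp (-x) * k x) * indicator {a<..} x \<partial>lborel) =
        (\<integral>x. indicator {max c a..} x * (exp (-x) * k x) \<partial>lborel)"
    using AE_lborel_singleton[of a]
    by (intro integral_cong_AE) (auto elim!: eventually_mono simp: indicator_def)
  also have "\<dots> = 0" using B0[of "max c a"] by (simp add: B_def)
  finally show ?thesis .
qed

lemma k0_from: "AE x in lborel. x \<ge> c \<longrightarrow> k x = 0"
proof -
  define P where "P x = indicator {c..} x * max (exp (-x) * k x) 0" for x :: real
  define N where "N x = indicator {c..} x * max (- (exp (-x) * k x)) 0" for x :: real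
  have [measurable]: "P \<in> borel_measurable borel" "N \<in> borel_measurable borel"
    unfolding P_def N_def by measurable
  have intS: "integrable lborel (\<lambda>x. F x * indicator S x)" if "S \<in> sets borel"
    and F: "F = P \<or> F = N" for F S
  proof (rule Bochner_Integration.integrable_bound[OF integrable_abs[OF intB[of c]]])
    show "(\<lambda>x. F x * indicator S x) \<in> borel_measurable lborel" using F that by auto
    show "AE x in lborel. norm (F x * indicator S x) \<le> norm \<bar>indicator {c..} x * (exp (- x) * k x)\<bar>"
      using F by (intro AE_I2) (auto simp: P_def N_def indicator_def)
  qed
  have Pnn: "0 \<le> P x" "0 \<le> N x" for x by (auto simp: P_def N_def)
  have eqS': "emeasure (density lborel F) S = ennreal (\<integral>x. F x * indicator S x \<partial>lborel)"
    if S: "S \<in> sets borel" and F: "F = P \<or> F = N" for S F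
  proof -
    have [measurable]: "F \<in> borel_measurable borel" using F by auto
    have "emeasure (density lborel F) S = (\<integral>\<^sup>+x. ennreal (F x) * indicator S x \<partial>lborel)"
      using S by (subst emeasure_density) auto
    also have "\<dots> = (\<integral>\<^sup>+x. ennreal (F x * indicator S x) \<partial>lborel)"
      by (intro nn_integral_cong) (auto simp: indicator_def)
    also have "\<dots> = ennreal (\<integral>x. F x * indicator S x \<partial>lborel)"
      using intS[OF S F] F Pnn by (intro nn_integral_eq_integral) auto
    finally show ?thesis .
  qed
  have eqS: "emeasure (density lborel P) S = ennreal (\<integral>x. P x * indicator S x \<partial>lborel)"
    "emeasure (density lborel N) S = ennreal (\<integral>x. N x * indicator S x \<partial>lborel)"
    if "S \<in> sets borel" for S
    using eqS'[OF that] by auto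
  have "density lborel P = density lborel N"
  proof (rule measure_eqI_lessThan)
    show "sets (density lborel P) = sets borel" "sets (density lborel N) = sets borel" by auto
    show "emeasure (density lborel P) {x<..} < \<infinity>" for x
      using eqS(1)[of "{x<..}"] by simp
    show "emeasure (density lborel P) {a<..} = emeasure (density lborel N) {a<..}" for a
    proof -
      have "(\<integral>x. P x * indicator {a<..} x \<partial>lborel) - (\<integral>x. N x * indicator {a<..} x \<partial>lborel)
          = (\<integral>x. P x * indicator {a<..} x - N x * indicator {a<..} x \<partial>lborel)"
        using intS[of "{a<..}" P] intS[of "{a<..}" N] by simp
      also have "\<dots> = (\<integral>x. indicator {c..} x * (exp (-x) * k x) * indicator {a<..} x \<partial>lborel)"
        by (intro Bochner_Integration.integral_cong) (auto simp: P_def N_def indicator_def max_def)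
      also have "\<dots> = 0" by (rule zero_Ioi)
      finally show ?thesis using eqS[of "{a<..}"] by simp
    qed
  qed
  then have "AE x in lborel. ennreal (P x) = ennreal (N x)"
    by (intro sigma_finite_measure.density_unique[OF sigma_finite_lborel]) auto
  then show ?thesis
  proof eventually_elim
    fix x assume "ennreal (P x) = ennreal (N x)"
    then have "P x = N x" by (simp add: P_def N_def)
    then show "x \<ge> c \<longrightarrow> k x = 0" by (auto simp: P_def N_def max_def split: if_splits)
  qed
qed

lemma k0: "AE x in lborel. k x = 0"
proof -
  have "AE x in lborel. \<forall>n::nat. x \<ge> - real n \<longrightarrow> k x = 0"
    unfolding AE_all_countable using k0_from by blast
  then show ?thesis
  proof eventually_elim
    fix x :: real assume a: "\<forall>n::nat. x \<ge> - real n \<longrightarrow> k x = 0"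
    obtain n :: nat where "- x \<le> real n" using real_arch_simple by blast
    with a show "k x = 0" by (metis minus_le_iff)
  qed
qed

end

theorem theorem10:
  fixes b :: real and f g1 g2 :: "real \<Rightarrow> real"
  assumes "b > 0"
    and "g1 \<in> borel_measurable lebesgue" and "g2 \<in> borel_measurable lebesgue"
    and "\<And>q. integrable (laplace_measure b) (\<lambda>z. g1 (q + z))"
    and "\<And>q. integrable (laplace_measure b) (\<lambda>z. g2 (q + z))"
    and "\<And>q. (\<integral>z. g1 (q + z) \<partial>laplace_measure b) = f q"
    and "\<And>q. (\<integral>z. g2 (q + z) \<partial>laplace_measure b) = f q"
  shows "AE x in lebesgue. g1 x = g2 x"
proof -
  note b = assms(1)
  define ld where "ld = laplace_density b"
  have ld_eq: "ld z = exp (- \<bar>z\<bar> / b) / (2 * b)" for z by (simp add: ld_def laplace_density_def)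
  have ld_m[measurable]: "ld \<in> borel_measurable borel" unfolding ld_eq[abs_def] by measurable
  have ld_nn: "0 \<le> ld z" for z using b by (simp add: ld_eq)
  define u where "u x = g1 x - g2 x" for x
  have "u \<in> borel_measurable (completion lborel)"
    using assms(2,3) unfolding u_def by measurable
  then obtain k' where k'm[measurable]: "k' \<in> borel_measurable lborel" and uk: "AE x in lborel. u x = k' x"
    using completion_ex_borel_measurable_real by blast
  have k'b[measurable]: "k' \<in> borel_measurable borel" using k'm by simp
  from uk obtain N where N: "{x \<in> space lborel. \<not> u x = k' x} \<subseteq> N" "N \<in> null_sets lborel"
    by (metis AE_E null_setsI)
  have ukq: "AE z in lebesgue. u (q + z) = k' (q + z)" for q
  proof -
    have "{x. x - (- q) \<in> N} \<in> null_sets lborel" by (rule null_sets_translation[OF N(2)])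
    then have "AE z in lborel. z \<notin> {x. x - (- q) \<in> N}" by (rule AE_not_in)
    then have "AE z in lborel. u (q + z) = k' (q + z)"
      by eventually_elim (use N(1) in \<open>auto simp: add.commute\<close>)
    then show ?thesis by (rule AE_completion)
  qed
  have meas_g: "(\<lambda>z. g (q + z)) \<in> borel_measurable lebesgue"
    if "integrable (laplace_measure b) (\<lambda>z. g (q + z))" for g :: "real \<Rightarrow> real" and q
  proof -
    have "(\<lambda>z. g (q + z)) \<in> borel_measurable (laplace_measure b)" using that by auto
    then show ?thesis unfolding laplace_measure_def by (simp cong: measurable_cong_sets)
  qed
  have lm: "laplace_measure b = density lebesgue (\<lambda>x. ennreal (ld x))"
    by (simp add: laplace_measure_def ld_def)
  have ld_leb[measurable]: "ld \<in> borel_measurable lebesgue" using ld_m by (simp add: measurable_completion)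
  have int_g: "integrable lebesgue (\<lambda>z. ld z * g (q + z))"
    and intg_g: "(\<integral>z. ld z * g (q + z) \<partial>lebesgue) = (\<integral>z. g (q + z) \<partial>laplace_measure b)"
    if "integrable (laplace_measure b) (\<lambda>z. g (q + z))" for g :: "real \<Rightarrow> real" and q
  proof -
    note [measurable] = meas_g[OF that]
    show "integrable lebesgue (\<lambda>z. ld z * g (q + z))"
      using that unfolding lm by (subst (asm) integrable_density) (auto simp: ld_nn)
    show "(\<integral>z. ld z * g (q + z) \<partial>lebesgue) = (\<integral>z. g (q + z) \<partial>laplace_measure b)"
      unfolding lm by (subst integral_density) (auto simp: ld_nn)
  qed
  have intk: "integrable lborel (\<lambda>z. ld z * k' (q + z))" and intk0: "(\<integral>z. ld z * k' (q + z) \<partial>lborel) = 0" for q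
  proof -
    have i1: "integrable lebesgue (\<lambda>z. ld z * u (q + z))"
      using int_g[OF assms(4)] int_g[OF assms(5)] unfolding u_def by (simp add: right_diff_distrib)
    have e1: "(\<integral>z. ld z * u (q + z) \<partial>lebesgue) = 0"
      using int_g[OF assms(4)] int_g[OF assms(5)] intg_g[OF assms(4)] intg_g[OF assms(5)] assms(6,7)
      unfolding u_def by (simp add: right_diff_distrib)
    have ae: "AE z in lebesgue. ld z * u (q + z) = ld z * k' (q + z)"
      using ukq[of q] by eventually_elim simp
    have i2: "integrable lebesgue (\<lambda>z. ld z * k' (q + z))"
    proof (rule integrable_cong_AE_imp[OF i1 _ ae])
      show "(\<lambda>z. ld z * k' (q + z)) \<in> borel_measurable lebesgue"
        by (rule measurable_completion) measurable
    qed
    have e2: "(\<integral>z. ld z * k' (q + z) \<partial>lebesgue) = 0"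
    proof -
      have "(\<lambda>z. ld z * k' (q + z)) \<in> borel_measurable lebesgue"
        by (rule measurable_completion) measurable
      moreover have "(\<lambda>z. ld z * u (q + z)) \<in> borel_measurable lebesgue"
        using i1 by auto
      ultimately show ?thesis using e1 integral_cong_AE[OF _ _ ae] by simp
    qed
    show "integrable lborel (\<lambda>z. ld z * k' (q + z))"
      using i2 by (subst (asm) integrable_completion) auto
    show "(\<integral>z. ld z * k' (q + z) \<partial>lborel) = 0"
      using e2 by (subst (asm) integral_completion) auto
  qed
  define k where "k y = k' (b * y)" for y
  have aff: "exp (- \<bar>x - q\<bar>) * k x = 2 * b * (ld (- (b * q) + b * x) * k' (b * q + (- (b * q) + b * x)))" for x q
  proof -
    have e: "- (b * q) + b * x = b * (x - q)" by (simp add: algebra_simps)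
    have "\<bar>- (b * q) + b * x\<bar> / b = \<bar>x - q\<bar>"
      unfolding e using b by (simp add: abs_mult)
    then have "ld (- (b * q) + b * x) = exp (- \<bar>x - q\<bar>) / (2 * b)"
      unfolding ld_eq by (simp only: minus_divide_left[symmetric])
    moreover have "k' (b * q + (- (b * q) + b * x)) = k x" by (simp add: k_def)
    ultimately show ?thesis using b by simp
  qed
  interpret core k
  proof
    show "k \<in> borel_measurable borel" unfolding k_def by measurable
    fix q
    have "integrable lborel (\<lambda>x. ld (- (b * q) + b * x) * k' (b * q + (- (b * q) + b * x)))"
      using lborel_integrable_real_affine[OF intk[of "b*q"], of b "- (b * q)"] b by simp
    then show "integrable lborel (\<lambda>x. exp (- \<bar>x - q\<bar>) * k x)"
      unfolding aff by (intro integrable_mult_right)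
    have "(\<integral>z. ld z * k' (b * q + z) \<partial>lborel) = \<bar>b\<bar> *\<^sub>R (\<integral>x. ld (- (b * q) + b * x) * k' (b * q + (- (b * q) + b * x)) \<partial>lborel)"
      using lborel_integral_real_affine[where c=b and t="- (b*q)" and f="\<lambda>z. ld z * k' (b * q + z)"] b by simp
    then have "(\<integral>x. ld (- (b * q) + b * x) * k' (b * q + (- (b * q) + b * x)) \<partial>lborel) = 0"
      using intk0[of "b*q"] b by simp
    then show "(\<integral>x. exp (- \<bar>x - q\<bar>) * k x \<partial>lborel) = 0"
      unfolding aff by simp
  qed
  have "AE x in lborel. k' (b * x) = 0" using k0 by (simp add: k_def)
  then have "AE x in lborel. k' (b * (0 + (1/b) * x)) = 0"
    using b by (intro AE_borel_affine) auto
  then have "AE x in lborel. k' x = 0" using b by simp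
  then have "AE x in lebesgue. k' x = 0" by (rule AE_completion)
  moreover have "AE x in lebesgue. u x = k' x" using uk by (rule AE_completion)
  ultimately show ?thesis by eventually_elim (simp add: u_def)
qed

end
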